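(* Consider a discrete-time system over $t=0,\dots,T$ with dynamics $x_0=f_0(\delta_0)$, $x_t=f_t(x_{t-1},u_{t-1},\delta_t)$ for $t=1,\dots,T$, and measured outputs $y_0=g_0(x_0,\delta_0)$, $y_t=g_t(x_t,u_{t-1},\delta_t)$ for $t=1,\dots,T-1$, where $u_t$ are control inputs and $\delta_t$ exogenous inputs. Let $\psi_t$ be the input-output maps defined by $y_t=\psi_t(u_{0:t-1},\delta_{0:t})$ (obtained by iterating the dynamics), with $\psi_0(\delta_0)=g_0(f_0(\delta_0),\delta_0)$. Suppose the system is purifiable, i.e., for each $t=1,\dots,T-1$ there exist mappings $p_t,q_t,\xi_t$ such that for all $u_{0:t-1}$ and $\delta_{0:t}$, \[ p_t(\psi_{0:t}(u_{0:t-1},\delta_{0:t}),u_{0:t-1})=\xi_t(\delta_{0:t}) \iff q_t(\xi_{0:t}(\delta_{0:t}),u_{0:t-1})=\psi_t(u_{0:t-1},\delta_{0:t}), \] and set $p_0(y_0)=y_0$, $q_0(e_0)=e_0$, $\xi_0(\delta_0)=g_0(f_0(\delta_0),\delta_0)$. Let $e_t=\xi_t(\delta_{0:t})$ (the purified output) and $e=\xi(\delta)=(e_0,\dots,e_{T-1})$. Then there is a one-to-one correspondence between causal output feedback policies $\pi=(\pi_0,\dots,\pi_{T-1})$, $u_t=\pi_t(y_{0:t})$, and causal policies $Q=(Q_0,\dots,Q_{T-1})$ in the purified output, $u_t=Q_t(e_{0:t})$. Moreover, given a causal $Q$ in $e$, the unique corresponding causal $\pi$ in $y$ is given by the recursion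 \[ \pi_0(y_0)=Q_0(y_0),\qquad \pi_t(y_{0:t})=Q_t\big(p_{0:t}(y_{0:t},\pi_{0:t-1}(y_{0:t-1}))\big),\quad t=1,\dots,T-1. \]
   Context: Subscripts $t_1:t_2$ denote trajectories, e.g. $\delta_{0:t}=(\delta_0,\dots,\delta_t)$, $u_{0:t-1}=(u_0,\dots,u_{t-1})$. The notation $p_{0:t}(y_{0:t},u_{0:t-1})$ denotes the vector $(p_0(y_0),p_1(y_{0:1},u_0),\dots,p_t(y_{0:t},u_{0:t-1}))$, and similarly $\psi_{0:t}$, $\xi_{0:t}$, $\pi_{0:t-1}(y_{0:t-1})=(\pi_0(y_0),\dots,\pi_{t-1}(y_{0:t-1}))$. A policy is causal if its $t$-th component depends only on the arguments up to time $t$. A policy $\pi$ in $y$ and a policy $Q$ in $e$ correspond when they generate the same closed-loop control inputs, i.e., $u_t=\pi_t(y_{0:t})$ for all $t$ exactly when $u_t=Q_t(e_{0:t})$ for all $t$, for every exogenous input trajectory. *)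

theory Defs
  imports Main
begin

(* Trajectories are functions nat => 'a; a map on the finite trajectory a_{0:n}
   is rendered as a function on whole trajectories that depends only on a_0..a_n. *)

definition depends_upto :: "nat \<Rightarrow> ((nat \<Rightarrow> 'a) \<Rightarrow> 'b) \<Rightarrow> bool" where
  "depends_upto n F \<longleftrightarrow> (\<forall>a b. (\<forall>i\<le>n. a i = b i) \<longrightarrow> F a = F b)"

definition depends_upto2 :: "nat \<Rightarrow> nat \<Rightarrow> ((nat \<Rightarrow> 'a) \<Rightarrow> (nat \<Rightarrow> 'c) \<Rightarrow> 'b) \<Rightarrow> bool" where
  "depends_upto2 n m F \<longleftrightarrow>
     (\<forall>a b c d. (\<forall>i\<le>n. a i = b i) \<longrightarrow> (\<forall>i<m. c i = d i) \<longrightarrow> F a c = F b d)"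

definition causal_policy :: "nat \<Rightarrow> (nat \<Rightarrow> (nat \<Rightarrow> 'a) \<Rightarrow> 'u) \<Rightarrow> bool" where
  "causal_policy T P \<longleftrightarrow> (\<forall>t<T. depends_upto t (P t))"

primrec state :: "('d \<Rightarrow> 'x) \<Rightarrow> (nat \<Rightarrow> 'x \<Rightarrow> 'u \<Rightarrow> 'd \<Rightarrow> 'x)
                  \<Rightarrow> (nat \<Rightarrow> 'u) \<Rightarrow> (nat \<Rightarrow> 'd) \<Rightarrow> nat \<Rightarrow> 'x" where
  "state f0 f u d 0 = f0 (d 0)"
| "state f0 f u d (Suc t) = f (Suc t) (state f0 f u d t) (u t) (d (Suc t))"

definition psi :: "('d \<Rightarrow> 'x) \<Rightarrow> (nat \<Rightarrow> 'x \<Rightarrow> 'u \<Rightarrow> 'd \<Rightarrow> 'x)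
                  \<Rightarrow> ('x \<Rightarrow> 'd \<Rightarrow> 'y) \<Rightarrow> (nat \<Rightarrow> 'x \<Rightarrow> 'u \<Rightarrow> 'd \<Rightarrow> 'y)
                  \<Rightarrow> nat \<Rightarrow> (nat \<Rightarrow> 'u) \<Rightarrow> (nat \<Rightarrow> 'd) \<Rightarrow> 'y" where
  "psi f0 f g0 g t u d =
     (if t = 0 then g0 (state f0 f u d 0) (d 0)
      else g t (state f0 f u d t) (u (t - 1)) (d t))"

definition corresponds ::
  "nat \<Rightarrow> (nat \<Rightarrow> (nat \<Rightarrow> 'u) \<Rightarrow> (nat \<Rightarrow> 'd) \<Rightarrow> 'y) \<Rightarrow> (nat \<Rightarrow> (nat \<Rightarrow> 'd) \<Rightarrow> 'e)
   \<Rightarrow> (nat \<Rightarrow> (nat \<Rightarrow> 'y) \<Rightarrow> 'u) \<Rightarrow> (nat \<Rightarrow> (nat \<Rightarrow> 'e) \<Rightarrow> 'u) \<Rightarrow> bool" where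
  "corresponds T Psi Xi Pi Q \<longleftrightarrow>
     (\<forall>d u. (\<forall>t<T. u t = Pi t (\<lambda>i. Psi i u d)) \<longleftrightarrow> (\<forall>t<T. u t = Q t (\<lambda>i. Xi i d)))"

function pi_of_Q :: "(nat \<Rightarrow> (nat \<Rightarrow> 'y) \<Rightarrow> 'u) \<Rightarrow> (nat \<Rightarrow> (nat \<Rightarrow> 'y) \<Rightarrow> (nat \<Rightarrow> 'u) \<Rightarrow> 'y)
                     \<Rightarrow> nat \<Rightarrow> (nat \<Rightarrow> 'y) \<Rightarrow> 'u" where
  "pi_of_Q Q p t y =
     Q t (\<lambda>s. if s \<le> t then p s y (\<lambda>i. if i < s then pi_of_Q Q p i y else undefined)
              else undefined)"
  by auto
termination by (relation "measure (\<lambda>(Q, p, t, y). t)") auto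

end

theory Submission
  imports Defs
begin

declare pi_of_Q.simps[simp del]

lemma gen_causal:
  fixes Q :: "nat \<Rightarrow> (nat \<Rightarrow> 'a) \<Rightarrow> 'u" and P :: "nat \<Rightarrow> (nat \<Rightarrow> 'a) \<Rightarrow> (nat \<Rightarrow> 'u) \<Rightarrow> 'a"
  assumes PC: "\<forall>s<T. depends_upto2 s s (P s)"
  shows "causal_policy T (pi_of_Q Q P)"
proof -
  have "\<forall>y y'. (\<forall>i\<le>t. y i = y' i) \<longrightarrow> pi_of_Q Q P t y = pi_of_Q Q P t y'" if "t < T" for t
    using that
  proof (induction t rule: less_induct)
    case (less t)
    show ?case
    proof (intro allI impI)
      fix y y' :: "nat \<Rightarrow> 'a" assume agr: "\<forall>i\<le>t. y i = y' i"
      have "(\<lambda>s. if s \<le> t then P s y (\<lambda>i. if i < s then pi_of_Q Q P i y else undefined) else undefined)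
          = (\<lambda>s. if s \<le> t then P s y' (\<lambda>i. if i < s then pi_of_Q Q P i y' else undefined) else undefined)"
      proof (rule ext)
        fix s
        show "(if s \<le> t then P s y (\<lambda>i. if i < s then pi_of_Q Q P i y else undefined) else undefined)
          = (if s \<le> t then P s y' (\<lambda>i. if i < s then pi_of_Q Q P i y' else undefined) else undefined)"
        proof (cases "s \<le> t")
          case True
          have ih: "\<forall>i<s. (if i < s then pi_of_Q Q P i y else undefined) = (if i < s then pi_of_Q Q P i y' else undefined)"
          proof (intro allI impI)
            fix i assume iss: "i < s"
            then have it: "i < t" using True by simp
            then have "\<forall>y y'. (\<forall>j\<le>i. y j = y' j) \<longrightarrow> pi_of_Q Q P i y = pi_of_Q Q P i y'"
              using less.IH less.prems by simp
            moreover have "\<forall>j\<le>i. y j = y' j" using agr it by simp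
            ultimately show "(if i < s then pi_of_Q Q P i y else undefined) = (if i < s then pi_of_Q Q P i y' else undefined)"
              using iss by simp
          qed
          have "depends_upto2 s s (P s)" using PC True less.prems by simp
          then have D: "\<And>a b c d. (\<forall>i\<le>s. a i = b i) \<Longrightarrow> (\<forall>i<s. c i = d i) \<Longrightarrow> P s a c = P s b d"
            unfolding depends_upto2_def by blast
          have "\<forall>i\<le>s. y i = y' i" using agr True by simp
          then have "P s y (\<lambda>i. if i < s then pi_of_Q Q P i y else undefined) = P s y' (\<lambda>i. if i < s then pi_of_Q Q P i y' else undefined)"
            by (rule D) (use ih in simp)
          then show ?thesis using True by simp
        qed simp
      qed
      then show "pi_of_Q Q P t y = pi_of_Q Q P t y'" by (simp only: pi_of_Q.simps[of Q P t])
    qed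
  qed
  then show ?thesis unfolding causal_policy_def depends_upto_def by blast
qed

lemma gen_key:
  fixes Q :: "nat \<Rightarrow> (nat \<Rightarrow> 'a) \<Rightarrow> 'u" and P :: "nat \<Rightarrow> (nat \<Rightarrow> 'a) \<Rightarrow> (nat \<Rightarrow> 'u) \<Rightarrow> 'a"
  assumes PC: "\<forall>s<T. depends_upto2 s s (P s)"
    and PA: "\<forall>s<T. \<forall>u d. P s (\<lambda>i. A i u d) u = B s u d"
    and QC: "causal_policy T Q"
    and tT: "t < T"
    and prev: "\<forall>i<t. pi_of_Q Q P i (\<lambda>i. A i u d) = u i"
  shows "pi_of_Q Q P t (\<lambda>i. A i u d) = Q t (\<lambda>i. B i u d)"
proof -
  let ?Y = "\<lambda>i. A i u d"
  have "\<forall>s\<le>t. (if s \<le> t then P s ?Y (\<lambda>i. if i < s then pi_of_Q Q P i ?Y else undefined) else undefined) = B s u d"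
  proof (intro allI impI)
    fix s assume st: "s \<le> t"
    have "depends_upto2 s s (P s)" using PC st tT by auto
    then have D: "\<And>a b c d. (\<forall>i\<le>s. a i = b i) \<Longrightarrow> (\<forall>i<s. c i = d i) \<Longrightarrow> P s a c = P s b d"
      unfolding depends_upto2_def by blast
    have "\<forall>i<s. (if i < s then pi_of_Q Q P i ?Y else undefined) = u i" using prev st by simp
    then have "P s ?Y (\<lambda>i. if i < s then pi_of_Q Q P i ?Y else undefined) = P s ?Y u"
      by (intro D) simp_all
    also have "\<dots> = B s u d" using PA st tT by auto
    finally show "(if s \<le> t then P s ?Y (\<lambda>i. if i < s then pi_of_Q Q P i ?Y else undefined) else undefined) = B s u d"
      using st by simp
  qed
  note X = this
  have "depends_upto t (Q t)" using QC tT unfolding causal_policy_def by blast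
  then have D2: "\<And>a b. (\<forall>i\<le>t. a i = b i) \<Longrightarrow> Q t a = Q t b"
    unfolding depends_upto_def by blast
  have E: "Q t (\<lambda>s. if s \<le> t then P s ?Y (\<lambda>i. if i < s then pi_of_Q Q P i ?Y else undefined) else undefined) = Q t (\<lambda>i. B i u d)"
    by (rule D2) (rule X)
  have F: "pi_of_Q Q P t ?Y = Q t (\<lambda>s. if s \<le> t then P s ?Y (\<lambda>i. if i < s then pi_of_Q Q P i ?Y else undefined) else undefined)"
    by (rule pi_of_Q.simps)
  show ?thesis using F E by (rule trans)
qed

lemma gen_corr:
  fixes Q :: "nat \<Rightarrow> (nat \<Rightarrow> 'a) \<Rightarrow> 'u" and P :: "nat \<Rightarrow> (nat \<Rightarrow> 'a) \<Rightarrow> (nat \<Rightarrow> 'u) \<Rightarrow> 'a"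
  assumes PC: "\<forall>s<T. depends_upto2 s s (P s)"
    and PA: "\<forall>s<T. \<forall>u d. P s (\<lambda>i. A i u d) u = B s u d"
    and QC: "causal_policy T Q"
  shows "(\<forall>t<T. u t = pi_of_Q Q P t (\<lambda>i. A i u d)) \<longleftrightarrow> (\<forall>t<T. u t = Q t (\<lambda>i. B i u d))"
proof
  assume H: "\<forall>t<T. u t = pi_of_Q Q P t (\<lambda>i. A i u d)"
  show "\<forall>t<T. u t = Q t (\<lambda>i. B i u d)"
  proof (intro allI impI)
    fix t assume tT: "t < T"
    have "pi_of_Q Q P t (\<lambda>i. A i u d) = Q t (\<lambda>i. B i u d)"
      by (rule gen_key[OF PC PA QC tT]) (use H tT in auto)
    then show "u t = Q t (\<lambda>i. B i u d)" using H tT by simp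
  qed
next
  assume H: "\<forall>t<T. u t = Q t (\<lambda>i. B i u d)"
  have "t < T \<longrightarrow> pi_of_Q Q P t (\<lambda>i. A i u d) = u t" for t
  proof (induction t rule: less_induct)
    case (less t)
    show ?case
    proof
      assume tT: "t < T"
      have "pi_of_Q Q P t (\<lambda>i. A i u d) = Q t (\<lambda>i. B i u d)"
        by (rule gen_key[OF PC PA QC tT]) (use less.IH tT in auto)
      then show "pi_of_Q Q P t (\<lambda>i. A i u d) = u t" using H tT by simp
    qed
  qed
  then show "\<forall>t<T. u t = pi_of_Q Q P t (\<lambda>i. A i u d)" by auto
qed

theorem theorem2:
  fixes T :: nat
    and f0 :: "'d \<Rightarrow> 'x" and f :: "nat \<Rightarrow> 'x \<Rightarrow> 'u \<Rightarrow> 'd \<Rightarrow> 'x"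
    and g0 :: "'x \<Rightarrow> 'd \<Rightarrow> 'y" and g :: "nat \<Rightarrow> 'x \<Rightarrow> 'u \<Rightarrow> 'd \<Rightarrow> 'y"
    and p :: "nat \<Rightarrow> (nat \<Rightarrow> 'y) \<Rightarrow> (nat \<Rightarrow> 'u) \<Rightarrow> 'y"
    and q :: "nat \<Rightarrow> (nat \<Rightarrow> 'y) \<Rightarrow> (nat \<Rightarrow> 'u) \<Rightarrow> 'y"
    and \<xi> :: "nat \<Rightarrow> (nat \<Rightarrow> 'd) \<Rightarrow> 'y"
  assumes p_causal: "\<And>t. 1 \<le> t \<Longrightarrow> t < T \<Longrightarrow> depends_upto2 t t (p t)"
    and q_causal: "\<And>t. 1 \<le> t \<Longrightarrow> t < T \<Longrightarrow> depends_upto2 t t (q t)"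
    and xi_causal: "\<And>t. 1 \<le> t \<Longrightarrow> t < T \<Longrightarrow> depends_upto t (\<xi> t)"
    and purifiable: "\<And>t u d. 1 \<le> t \<Longrightarrow> t < T \<Longrightarrow>
          p t (\<lambda>i. psi f0 f g0 g i u d) u = \<xi> t d
        \<and> q t (\<lambda>i. \<xi> i d) u = psi f0 f g0 g t u d"
    and p0: "p 0 = (\<lambda>y u. y 0)"
    and q0: "q 0 = (\<lambda>e u. e 0)"
    and xi0: "\<xi> 0 = (\<lambda>d. g0 (f0 (d 0)) (d 0))"
  shows
    "(\<forall>Q. causal_policy T Q \<longrightarrow>
        causal_policy T (pi_of_Q Q p) \<and> corresponds T (psi f0 f g0 g) \<xi> (pi_of_Q Q p) Q)
   \<and> (\<forall>\<pi>. causal_policy T \<pi> \<longrightarrow>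
        (\<exists>Q. causal_policy T Q \<and> corresponds T (psi f0 f g0 g) \<xi> \<pi> Q))
   \<and> (\<forall>Q \<pi> \<pi>'. causal_policy T Q \<longrightarrow> causal_policy T \<pi> \<longrightarrow> causal_policy T \<pi>' \<longrightarrow>
        corresponds T (psi f0 f g0 g) \<xi> \<pi> Q \<longrightarrow> corresponds T (psi f0 f g0 g) \<xi> \<pi>' Q \<longrightarrow>
        (\<forall>d t. t < T \<longrightarrow>
           (let u = (\<lambda>s. Q s (\<lambda>i. \<xi> i d)) in
              \<pi> t (\<lambda>i. psi f0 f g0 g i u d) = \<pi>' t (\<lambda>i. psi f0 f g0 g i u d))))
   \<and> (\<forall>\<pi> Q Q'. causal_policy T \<pi> \<longrightarrow> causal_policy T Q \<longrightarrow> causal_policy T Q' \<longrightarrow>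
        corresponds T (psi f0 f g0 g) \<xi> \<pi> Q \<longrightarrow> corresponds T (psi f0 f g0 g) \<xi> \<pi> Q' \<longrightarrow>
        (\<forall>d t. t < T \<longrightarrow> Q t (\<lambda>i. \<xi> i d) = Q' t (\<lambda>i. \<xi> i d)))"
proof -
  let ?psi = "psi f0 f g0 g"
  have psi0: "?psi 0 u d = \<xi> 0 d" for u d by (simp add: psi_def xi0)
  have PC: "\<forall>s<T. depends_upto2 s s (p s)"
  proof (intro allI impI)
    fix s assume "s < T"
    then show "depends_upto2 s s (p s)"
      using p_causal[of s] by (cases "s = 0") (auto simp: p0 depends_upto2_def)
  qed
  have PA: "\<forall>s<T. \<forall>u d. p s (\<lambda>i. ?psi i u d) u = \<xi> s d"
  proof (intro allI impI)
    fix s u d assume sT: "s < T"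
    show "p s (\<lambda>i. ?psi i u d) u = \<xi> s d"
    proof (cases "s = 0")
      case True then show ?thesis by (simp add: p0 psi0)
    next
      case False then show ?thesis using purifiable[of s u d] sT by simp
    qed
  qed
  have QC': "\<forall>s<T. depends_upto2 s s (q s)"
  proof (intro allI impI)
    fix s assume "s < T"
    then show "depends_upto2 s s (q s)"
      using q_causal[of s] by (cases "s = 0") (auto simp: q0 depends_upto2_def)
  qed
  have QA: "\<forall>s<T. \<forall>u d. q s (\<lambda>i. \<xi> i d) u = ?psi s u d"
  proof (intro allI impI)
    fix s u d assume sT: "s < T"
    show "q s (\<lambda>i. \<xi> i d) u = ?psi s u d"
    proof (cases "s = 0")
      case True then show ?thesis by (simp add: q0 psi0)
    next
      case False then show ?thesis using purifiable[of s u d] sT by simp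
    qed
  qed
  have part1: "\<forall>Q. causal_policy T Q \<longrightarrow>
        causal_policy T (pi_of_Q Q p) \<and> corresponds T ?psi \<xi> (pi_of_Q Q p) Q"
  proof (intro allI impI conjI)
    fix Q :: "nat \<Rightarrow> (nat \<Rightarrow> 'y) \<Rightarrow> 'u" assume QC: "causal_policy T Q"
    show "causal_policy T (pi_of_Q Q p)" by (rule gen_causal[OF PC])
    show "corresponds T ?psi \<xi> (pi_of_Q Q p) Q"
      unfolding corresponds_def
    proof (intro allI)
      fix d u
      show "(\<forall>t<T. u t = pi_of_Q Q p t (\<lambda>i. ?psi i u d)) = (\<forall>t<T. u t = Q t (\<lambda>i. \<xi> i d))"
        by (rule gen_corr[where A = ?psi and B = "\<lambda>s u d. \<xi> s d", OF PC PA QC])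
    qed
  qed
  have part2: "\<forall>\<pi>. causal_policy T \<pi> \<longrightarrow>
        (\<exists>Q. causal_policy T Q \<and> corresponds T ?psi \<xi> \<pi> Q)"
  proof (intro allI impI)
    fix \<pi> :: "nat \<Rightarrow> (nat \<Rightarrow> 'y) \<Rightarrow> 'u" assume PiC: "causal_policy T \<pi>"
    have "causal_policy T (pi_of_Q \<pi> q)" by (rule gen_causal[OF QC'])
    moreover have "corresponds T ?psi \<xi> \<pi> (pi_of_Q \<pi> q)"
      unfolding corresponds_def
    proof (intro allI)
      fix d u
      show "(\<forall>t<T. u t = \<pi> t (\<lambda>i. ?psi i u d)) = (\<forall>t<T. u t = pi_of_Q \<pi> q t (\<lambda>i. \<xi> i d))"
        by (rule sym, rule gen_corr[where A = "\<lambda>s u d. \<xi> s d" and B = ?psi, OF QC' QA PiC])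
    qed
    ultimately show "\<exists>Q. causal_policy T Q \<and> corresponds T ?psi \<xi> \<pi> Q" by blast
  qed
  have part3: "\<forall>Q \<pi> \<pi>'. causal_policy T Q \<longrightarrow> causal_policy T \<pi> \<longrightarrow> causal_policy T \<pi>' \<longrightarrow>
        corresponds T ?psi \<xi> \<pi> Q \<longrightarrow> corresponds T ?psi \<xi> \<pi>' Q \<longrightarrow>
        (\<forall>d t. t < T \<longrightarrow>
           (let u = (\<lambda>s. Q s (\<lambda>i. \<xi> i d)) in
              \<pi> t (\<lambda>i. ?psi i u d) = \<pi>' t (\<lambda>i. ?psi i u d)))"
  proof (intro allI impI)
    fix Q \<pi> \<pi>' d t
    assume c1: "corresponds T ?psi \<xi> \<pi> Q" and c2: "corresponds T ?psi \<xi> \<pi>' Q" and tT: "t < T"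
    define u where "u = (\<lambda>s. Q s (\<lambda>i. \<xi> i d))"
    have R: "\<forall>t<T. u t = Q t (\<lambda>i. \<xi> i d)" unfolding u_def by simp
    have "\<forall>t<T. u t = \<pi> t (\<lambda>i. ?psi i u d)" using c1 R unfolding corresponds_def by blast
    moreover have "\<forall>t<T. u t = \<pi>' t (\<lambda>i. ?psi i u d)" using c2 R unfolding corresponds_def by blast
    ultimately have "\<pi> t (\<lambda>i. ?psi i u d) = \<pi>' t (\<lambda>i. ?psi i u d)" using tT by simp
    then show "let u = (\<lambda>s. Q s (\<lambda>i. \<xi> i d)) in \<pi> t (\<lambda>i. ?psi i u d) = \<pi>' t (\<lambda>i. ?psi i u d)"
      unfolding u_def Let_def .
  qed
  have part4: "\<forall>\<pi> Q Q'. causal_policy T \<pi> \<longrightarrow> causal_policy T Q \<longrightarrow> causal_policy T Q' \<longrightarrow>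
        corresponds T ?psi \<xi> \<pi> Q \<longrightarrow> corresponds T ?psi \<xi> \<pi> Q' \<longrightarrow>
        (\<forall>d t. t < T \<longrightarrow> Q t (\<lambda>i. \<xi> i d) = Q' t (\<lambda>i. \<xi> i d))"
  proof (intro allI impI)
    fix \<pi> Q Q' d t
    assume c1: "corresponds T ?psi \<xi> \<pi> Q" and c2: "corresponds T ?psi \<xi> \<pi> Q'" and tT: "t < T"
    define u where "u = (\<lambda>s. Q s (\<lambda>i. \<xi> i d))"
    have R: "\<forall>t<T. u t = Q t (\<lambda>i. \<xi> i d)" unfolding u_def by simp
    have "\<forall>t<T. u t = \<pi> t (\<lambda>i. ?psi i u d)" using c1 R unfolding corresponds_def by blast
    then have "\<forall>t<T. u t = Q' t (\<lambda>i. \<xi> i d)" using c2 unfolding corresponds_def by blast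
    then show "Q t (\<lambda>i. \<xi> i d) = Q' t (\<lambda>i. \<xi> i d)" using tT unfolding u_def by simp
  qed
  show ?thesis using part1 part2 part3 part4 by blast
qed

end
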